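(* Let $G$ be a finite group, $p$ an odd prime, and $A=\langle a\rangle$ a cyclic subgroup of $G$ of order $p^n$. Let $\eta\in\mathrm{Aut}(G)$. The following are equivalent: (1) there is a relative gamma function $\gamma:A\to\mathrm{Aut}(G)$ with $\gamma(a)=\eta$; (2) $A$ is $\eta$-invariant and the order of $\eta$ divides $p^n$. When these hold, such a $\gamma$ is unique.
   Context: Maps act on the right, written exponentially. For $A\le G$, a function $\gamma:A\to\mathrm{Aut}(G)$ is a relative gamma function on $A$ if $\gamma(g^{\gamma(h)}h)=\gamma(g)\gamma(h)$ for all $g,h\in A$ and $a^{\gamma(b)}\in A$ for all $a,b\in A$. *)

theory Defs
  imports "HOL-Algebra.Algebra"
begin

text \<open>Aut(G) is the library group AutoGroup G (carrier auto G, extensional bijections).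
  Its multiplication is composition with f \<otimes> g = f \<circ> g (g applied first).
  Since in the paper maps act on the right, the paper's product \<gamma>(g)\<gamma>(h)
  (first \<gamma>(g), then \<gamma>(h)) is \<gamma> h \<otimes> \<gamma> g in AutoGroup G, and g^{\<gamma>(h)} is \<gamma> h g.\<close>

definition relative_gamma ::
  "('a, 'b) monoid_scheme \<Rightarrow> 'a set \<Rightarrow> ('a \<Rightarrow> 'a \<Rightarrow> 'a) \<Rightarrow> bool" where
  "relative_gamma G A \<gamma> \<longleftrightarrow>
     (\<forall>g\<in>A. \<gamma> g \<in> auto G) \<and>
     (\<forall>g\<in>A. \<forall>h\<in>A. \<gamma> (\<gamma> h g \<otimes>\<^bsub>G\<^esub> h) = \<gamma> h \<otimes>\<^bsub>AutoGroup G\<^esub> \<gamma> g) \<and>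
     (\<forall>x\<in>A. \<forall>y\<in>A. \<gamma> y x \<in> A)"

end

theory Submission
  imports Defs "HOL-Number_Theory.Residues"
begin

definition gsum :: "nat \<Rightarrow> nat \<Rightarrow> nat" where "gsum s m = (\<Sum>k<m. s ^ k)"

lemma gsum_add: "gsum s (m + d) = gsum s m + s ^ m * gsum s d"
  by (induction d) (simp_all add: gsum_def power_add algebra_simps)

lemma gsum_Suc': "gsum s (Suc m) = s * gsum s m + 1"
  using gsum_add[of s 1 m] by (simp add: gsum_def)

lemma gsum_mult: "gsum s (m * q) = gsum s m * gsum (s ^ m) q"
proof (induction q)
  case 0 then show ?case by (simp add: gsum_def)
next
  case (Suc q)
  have "gsum s (m * Suc q) = gsum s (m * q + m)" by (simp add: algebra_simps)
  also have "\<dots> = gsum s m * gsum (s ^ m) q + s ^ (m*q) * gsum s m" using Suc gsum_add by simp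
  also have "\<dots> = gsum s m * gsum (s ^ m) (Suc q)"
    by (simp add: gsum_def power_mult algebra_simps)
  finally show ?case .
qed

lemma gsum_cong1: "[t = 1] (mod p) \<Longrightarrow> [gsum t q = q] (mod p)"
proof (induction q)
  case 0 then show ?case by (simp add: gsum_def)
next
  case (Suc q)
  have "[t ^ q = 1 ^ q] (mod p)" using Suc.prems cong_pow by blast
  then have h1: "[t ^ q = 1] (mod p)" by simp
  have h2: "[gsum t q = q] (mod p)" using Suc by simp
  have "[gsum t q + t ^ q = q + 1] (mod p)" using cong_add[OF h2 h1] .
  then show ?case by (simp add: gsum_def)
qed

lemma tpow: "\<exists>r. (1 + p*u) ^ k = 1 + k*p*u + p^2*r"
proof (induction k)
  case 0 then show ?case by simp
next
  case (Suc k)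
  then obtain r where r: "(1 + p*u) ^ k = 1 + k*p*u + p^2*r" by blast
  have "(1 + p*u) ^ Suc k = (1 + k*p*u + p^2*r) * (1 + p*u)" using r by simp
  also have "\<dots> = 1 + Suc k*p*u + p^2*(k*u*u + r + r*p*u)"
    by (simp add: algebra_simps power2_eq_square)
  finally show ?case by blast
qed

lemma tsum: "\<exists>R. gsum (1 + p*u) m = m + p*u*(\<Sum>k<m. k) + p^2*R"
proof (induction m)
  case 0 then show ?case by (simp add: gsum_def)
next
  case (Suc m)
  then obtain R where R: "gsum (1 + p*u) m = m + p*u*(\<Sum>k<m. k) + p^2*R" by blast
  obtain r where r: "(1 + p*u) ^ m = 1 + m*p*u + p^2*r" using tpow by blast
  have "gsum (1 + p*u) (Suc m) = gsum (1 + p*u) m + (1 + p*u) ^ m" by (simp add: gsum_def)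
  also have "\<dots> = Suc m + p*u*(\<Sum>k<Suc m. k) + p^2*(R + r)"
    using R r by (simp add: algebra_simps)
  finally show ?case by blast
qed

lemma two_sum: "2 * (\<Sum>k<m. k) = m * (m - 1::nat)"
proof (induction m)
  case (Suc m) thus ?case by (cases m) (simp_all add: algebra_simps)
qed simp

lemma gsum_p:
  assumes p: "Factorial_Ring.prime p" "odd p" and t: "[t = 1] (mod p)"
  shows "\<exists>c. gsum t p = p * c \<and> \<not> p dvd c"
proof -
  have p1: "p > 1" using p prime_gt_1_nat by blast
  have "t mod p = 1" using t p1 unfolding cong_def by simp
  then have tu: "t = 1 + p * (t div p)" by (metis add.commute div_mult_mod_eq mult.commute)
  obtain R where R: "gsum t p = p + p*(t div p)*(\<Sum>k<p. k) + p^2*R"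
    using tsum[of p "t div p" p] tu by metis
  obtain w where w: "p = 2*w + 1" using p(2) oddE by blast
  have "2 * (\<Sum>k<p. k) = p * (2*w)" using two_sum[of p] w by simp
  then have sw: "(\<Sum>k<p. k) = p * w" by simp
  have "gsum t p = p * (1 + p * ((t div p) * w + R))"
    using R sw by (simp add: algebra_simps power2_eq_square)
  moreover have "\<not> p dvd (1 + p * ((t div p) * w + R))"
  proof
    assume a1: "p dvd (1 + p * ((t div p) * w + R))"
    have "p dvd p * ((t div p) * w + R)" by simp
    then have "p dvd 1" using a1 dvd_add_right_iff by (metis add.commute)
    then show False using p1 by simp
  qed
  ultimately show ?thesis by blast
qed

lemma gsum_ppow:
  assumes p: "Factorial_Ring.prime p" "odd p" and s: "[s = 1] (mod p)"
  shows "\<exists>c. gsum s (p ^ k) = p ^ k * c \<and> \<not> p dvd c"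
proof (induction k)
  case 0 then show ?case using p(1) by (auto simp: gsum_def)
next
  case (Suc k)
  then obtain c where c: "gsum s (p ^ k) = p ^ k * c" "\<not> p dvd c" by blast
  have "[s ^ (p^k) = 1 ^ (p^k)] (mod p)" using s cong_pow by blast
  then obtain c' where c': "gsum (s ^ (p^k)) p = p * c'" "\<not> p dvd c'"
    using gsum_p[OF p] by auto
  have "gsum s (p ^ Suc k) = gsum s (p^k * p)" by (simp add: mult.commute)
  also have "\<dots> = p ^ Suc k * (c * c')" using gsum_mult c c' by simp
  finally show ?case using c c' p(1) by (meson prime_dvd_mult_iff)
qed

lemma gsum_dvd:
  assumes p: "Factorial_Ring.prime p" "odd p" and s: "[s = 1] (mod p)"
  shows "p ^ n dvd gsum s m \<Longrightarrow> p ^ n dvd m"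
proof (induction n)
  case 0 then show ?case by simp
next
  case (Suc n)
  then have "p ^ n dvd m" by (metis dvd_mult_right power_Suc)
  then obtain q where q: "m = p^n * q" by blast
  obtain c where c: "gsum s (p ^ n) = p ^ n * c" "\<not> p dvd c" using gsum_ppow[OF p s] by blast
  have "gsum s m = p^n * (c * gsum (s ^ (p^n)) q)" using q gsum_mult c by simp
  with Suc.prems have "p ^ n * p dvd p^n * (c * gsum (s ^ (p^n)) q)" by (simp add: mult.commute)
  then have "p dvd c * gsum (s ^ (p^n)) q"
    using p(1) by (simp add: prime_gt_0_nat)
  then have "p dvd gsum (s ^ (p^n)) q" using c(2) p(1) prime_dvd_mult_iff by blast
  moreover have "[s ^ (p^n) = 1 ^ (p^n)] (mod p)" using s cong_pow by blast
  then have "[gsum (s ^ (p^n)) q = q] (mod p)" using gsum_cong1 by simp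
  ultimately have "p dvd q" by (metis cong_dvd_iff)
  then show ?case using q by simp
qed


primrec circ :: "('a,'b) monoid_scheme \<Rightarrow> ('a \<Rightarrow> 'a) \<Rightarrow> 'a \<Rightarrow> nat \<Rightarrow> 'a" where
  "circ G \<eta> a 0 = \<one>\<^bsub>G\<^esub>"
| "circ G \<eta> a (Suc m) = \<eta> (circ G \<eta> a m) \<otimes>\<^bsub>G\<^esub> a"

context group begin

lemma aut_mult_apply: "f \<in> auto G \<Longrightarrow> g \<in> auto G \<Longrightarrow> x \<in> carrier G \<Longrightarrow> (f \<otimes>\<^bsub>AutoGroup G\<^esub> g) x = f (g x)"
  by (simp add: AutoGroup_def BijGroup_def auto_def compose_def)

lemma aut_one_apply: "x \<in> carrier G \<Longrightarrow> \<one>\<^bsub>AutoGroup G\<^esub> x = x"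
  by (simp add: AutoGroup_def BijGroup_def)

lemma aut_carrier: "carrier (AutoGroup G) = auto G"
  by (simp add: AutoGroup_def)

lemma aut_hom: "f \<in> auto G \<Longrightarrow> f \<in> hom G G"
  by (simp add: auto_def)

lemma aut_closed: "f \<in> auto G \<Longrightarrow> x \<in> carrier G \<Longrightarrow> f x \<in> carrier G"
  by (auto simp: auto_def hom_def)

lemma aut_mult: "f \<in> auto G \<Longrightarrow> x \<in> carrier G \<Longrightarrow> y \<in> carrier G \<Longrightarrow> f (x \<otimes> y) = f x \<otimes> f y"
  by (auto simp: auto_def hom_def)

lemma aut_inj: "f \<in> auto G \<Longrightarrow> inj_on f (carrier G)"
  by (auto simp: auto_def Bij_def bij_betw_def)

lemma aut_one: "f \<in> auto G \<Longrightarrow> f \<one> = \<one>"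
  using hom_one[OF aut_hom is_group is_group] by simp

lemma aut_natpow: "f \<in> auto G \<Longrightarrow> x \<in> carrier G \<Longrightarrow> f (x [^] (k::nat)) = f x [^] k"
  using hom_nat_pow[OF aut_hom _ is_group is_group] by simp

lemma aut_pow_Suc_apply:
  assumes "f \<in> auto G" "x \<in> carrier G"
  shows "(f [^]\<^bsub>AutoGroup G\<^esub> Suc j) x = f ((f [^]\<^bsub>AutoGroup G\<^esub> j) x)"
proof -
  interpret Aut: group "AutoGroup G" by (rule AutoGroup)
  have fc: "f \<in> carrier (AutoGroup G)" using assms aut_carrier by simp
  have "f [^]\<^bsub>AutoGroup G\<^esub> Suc j = f \<otimes>\<^bsub>AutoGroup G\<^esub> f [^]\<^bsub>AutoGroup G\<^esub> j"
    using Aut.nat_pow_Suc2[OF fc] .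
  moreover have "f [^]\<^bsub>AutoGroup G\<^esub> j \<in> auto G" using Aut.nat_pow_closed[OF fc] aut_carrier by simp
  ultimately show ?thesis using aut_mult_apply assms by simp
qed

lemma pow_nat_eq_cong:
  assumes "x \<in> carrier G"
  shows "x [^] (i::nat) = x [^] (j::nat) \<longleftrightarrow> [i = j] (mod ord x)"
proof -
  have "x [^] i = x [^] j \<longleftrightarrow> x [^] (int i) = x [^] (int j)" by (simp add: int_pow_int)
  also have "\<dots> \<longleftrightarrow> int (ord x) dvd (int j - int i)" using int_pow_eq[OF assms] .
  also have "\<dots> \<longleftrightarrow> [int i = int j] (mod int (ord x))" by (simp add: cong_iff_dvd_diff dvd_diff_commute)
  also have "\<dots> \<longleftrightarrow> [i = j] (mod ord x)" by (simp add: cong_int_iff)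
  finally show ?thesis .
qed

lemma gamma_one:
  assumes rg: "relative_gamma G A \<gamma>" and subA: "subgroup A G"
  shows "\<gamma> \<one> = \<one>\<^bsub>AutoGroup G\<^esub>"
proof -
  interpret Aut: group "AutoGroup G" by (rule AutoGroup)
  have oA: "\<one> \<in> A" using subgroup.one_closed[OF subA] .
  have ga: "\<gamma> \<one> \<in> auto G" using rg oA unfolding relative_gamma_def by auto
  have "\<gamma> (\<gamma> \<one> \<one> \<otimes> \<one>) = \<gamma> \<one> \<otimes>\<^bsub>AutoGroup G\<^esub> \<gamma> \<one>" using rg oA unfolding relative_gamma_def by auto
  then have "\<gamma> \<one> = \<gamma> \<one> \<otimes>\<^bsub>AutoGroup G\<^esub> \<gamma> \<one>" using aut_one[OF ga] by simp
  then show ?thesis using Aut.l_cancel_one' ga aut_carrier by simp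
qed

lemma gamma_circ:
  assumes rg: "relative_gamma G A \<gamma>" and subA: "subgroup A G" and aA: "a \<in> A" and ga: "\<gamma> a = \<eta>"
  shows "circ G \<eta> a m \<in> A \<and> \<gamma> (circ G \<eta> a m) = \<eta> [^]\<^bsub>AutoGroup G\<^esub> m"
proof (induction m)
  case 0
  then show ?case using gamma_one[OF rg subA] subgroup.one_closed[OF subA] by simp
next
  case (Suc m)
  interpret Aut: group "AutoGroup G" by (rule AutoGroup)
  have gaut: "\<gamma> a \<in> auto G" using rg aA unfolding relative_gamma_def by auto
  have etac: "\<eta> \<in> carrier (AutoGroup G)" using gaut ga aut_carrier by simp
  have c1: "\<gamma> a (circ G \<eta> a m) \<in> A" using rg aA Suc unfolding relative_gamma_def by auto
  have "\<gamma> (\<gamma> a (circ G \<eta> a m) \<otimes> a) = \<gamma> a \<otimes>\<^bsub>AutoGroup G\<^esub> \<gamma> (circ G \<eta> a m)"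
    using rg aA Suc unfolding relative_gamma_def by auto
  then have "\<gamma> (circ G \<eta> a (Suc m)) = \<eta> [^]\<^bsub>AutoGroup G\<^esub> Suc m"
    using Suc ga Aut.nat_pow_Suc2[OF etac] by simp
  moreover have "circ G \<eta> a (Suc m) \<in> A"
    using subgroup.m_closed[OF subA c1 aA] ga by simp
  ultimately show ?case by simp
qed

lemma gamma_pow_order:
  assumes rg: "relative_gamma G A \<gamma>" and subA: "subgroup A G" and finA: "finite A"
    and aA: "a \<in> A" and ga: "\<gamma> a = \<eta>"
  shows "\<eta> [^]\<^bsub>AutoGroup G\<^esub> (card A) = \<one>\<^bsub>AutoGroup G\<^esub>"
proof -
  have Ac: "\<And>x. x \<in> A \<Longrightarrow> x \<in> carrier G" using subgroup.subset[OF subA] by blast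
  have gaut: "\<And>g. g \<in> A \<Longrightarrow> \<gamma> g \<in> auto G"
    and gmul: "\<And>g h. g \<in> A \<Longrightarrow> h \<in> A \<Longrightarrow> \<gamma> (\<gamma> h g \<otimes> h) = \<gamma> h \<otimes>\<^bsub>AutoGroup G\<^esub> \<gamma> g"
    and gA: "\<And>x y. x \<in> A \<Longrightarrow> y \<in> A \<Longrightarrow> \<gamma> y x \<in> A"
    using rg unfolding relative_gamma_def by blast+
  define C where "C = \<lparr>carrier = A, monoid.mult = (\<lambda>x y. \<gamma> y x \<otimes> y), one = \<one>\<rparr>"
  have grpC: "group C"
  proof (rule groupI)
    fix x y assume "x \<in> carrier C" "y \<in> carrier C"
    then show "x \<otimes>\<^bsub>C\<^esub> y \<in> carrier C" using gA subgroup.m_closed[OF subA] by (simp add: C_def)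
  next
    show "\<one>\<^bsub>C\<^esub> \<in> carrier C" using subgroup.one_closed[OF subA] by (simp add: C_def)
  next
    fix x y z assume "x \<in> carrier C" "y \<in> carrier C" "z \<in> carrier C"
    then have x: "x \<in> A" and y: "y \<in> A" and z: "z \<in> A" by (simp_all add: C_def)
    have xc: "x \<in> carrier G" and yc: "y \<in> carrier G" and zc: "z \<in> carrier G"
      using Ac x y z by auto
    have gy: "\<gamma> y \<in> auto G" and gz: "\<gamma> z \<in> auto G" using gaut y z by auto
    have gyx: "\<gamma> y x \<in> carrier G" and gzy: "\<gamma> z y \<in> carrier G" 
      using aut_closed[OF gy xc] aut_closed[OF gz yc] .
    have gzyx: "\<gamma> z (\<gamma> y x) \<in> carrier G" using aut_closed[OF gz gyx] .
    have "\<gamma> (\<gamma> z y \<otimes> z) x = (\<gamma> z \<otimes>\<^bsub>AutoGroup G\<^esub> \<gamma> y) x"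
      using gmul[OF y z] by simp
    also have "\<dots> = \<gamma> z (\<gamma> y x)" by (rule aut_mult_apply[OF gz gy xc])
    finally have e: "\<gamma> (\<gamma> z y \<otimes> z) x = \<gamma> z (\<gamma> y x)" .
    have "(x \<otimes>\<^bsub>C\<^esub> y) \<otimes>\<^bsub>C\<^esub> z = \<gamma> z (\<gamma> y x \<otimes> y) \<otimes> z"
      by (simp add: C_def)
    also have "\<gamma> z (\<gamma> y x \<otimes> y) = \<gamma> z (\<gamma> y x) \<otimes> \<gamma> z y"
      by (rule aut_mult[OF gz gyx yc])
    also have "(\<gamma> z (\<gamma> y x) \<otimes> \<gamma> z y) \<otimes> z = \<gamma> z (\<gamma> y x) \<otimes> (\<gamma> z y \<otimes> z)"
      by (rule m_assoc[OF gzyx gzy zc])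
    also have "\<dots> = x \<otimes>\<^bsub>C\<^esub> (y \<otimes>\<^bsub>C\<^esub> z)" using e by (simp add: C_def)
    finally show "(x \<otimes>\<^bsub>C\<^esub> y) \<otimes>\<^bsub>C\<^esub> z = x \<otimes>\<^bsub>C\<^esub> (y \<otimes>\<^bsub>C\<^esub> z)" .
  next
    fix x assume "x \<in> carrier C" then have x: "x \<in> A" by (simp add: C_def)
    show "\<one>\<^bsub>C\<^esub> \<otimes>\<^bsub>C\<^esub> x = x" using x by (simp add: C_def aut_one gaut Ac)
  next
    fix x assume "x \<in> carrier C" then have x: "x \<in> A" by (simp add: C_def)
    have inj: "inj_on (\<gamma> x) A" using inj_on_subset[OF aut_inj[OF gaut[OF x]] subgroup.subset[OF subA]] .
    have "\<gamma> x ` A = A" by (rule endo_inj_surj[OF finA _ inj]) (use gA x in auto)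
    moreover have "inv x \<in> A" using subgroup.m_inv_closed[OF subA x] .
    ultimately have "inv x \<in> \<gamma> x ` A" by simp
    then obtain y where y: "y \<in> A" "\<gamma> x y = inv x" by (metis imageE)
    have "\<gamma> x y \<otimes> x = \<one>" using y(2) Ac[OF x] by simp
    then have "y \<otimes>\<^bsub>C\<^esub> x = \<one>\<^bsub>C\<^esub>" by (simp add: C_def)
    moreover have "y \<in> carrier C" using y(1) by (simp add: C_def)
    ultimately show "\<exists>y\<in>carrier C. y \<otimes>\<^bsub>C\<^esub> x = \<one>\<^bsub>C\<^esub>" by blast
  qed
  have powC: "a [^]\<^bsub>C\<^esub> m = circ G \<eta> a m" for m by (induction m) (simp_all add: C_def ga)
  have "a [^]\<^bsub>C\<^esub> (order C) = \<one>\<^bsub>C\<^esub>" using group.pow_order_eq_1[OF grpC] aA by (simp add: C_def)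
  then have "circ G \<eta> a (card A) = \<one>" using powC by (simp add: C_def order_def)
  then show ?thesis using gamma_circ[OF rg subA aA ga, of "card A"] gamma_one[OF rg subA] by simp
qed

lemma circ_pow:
  assumes "\<eta> \<in> auto G" "a \<in> carrier G" "\<eta> a = a [^] s"
  shows "circ G \<eta> a m = a [^] gsum s m"
proof (induction m)
  case 0 then show ?case by (simp add: gsum_def)
next
  case (Suc m)
  have "circ G \<eta> a (Suc m) = (a [^] s) [^] gsum s m \<otimes> a"
    using Suc aut_natpow[OF assms(1) assms(2)] assms(3) by simp
  also have "\<dots> = a [^] (s * gsum s m + 1)" using assms(2) by (simp add: nat_pow_pow)
  finally show ?case by (simp add: gsum_Suc')
qed

lemma autpow_pow:
  assumes "\<eta> \<in> auto G" "a \<in> carrier G" "\<eta> a = a [^] s"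
  shows "(\<eta> [^]\<^bsub>AutoGroup G\<^esub> j) (a [^] (k::nat)) = a [^] (s ^ j * k)"
proof (induction j)
  case 0 then show ?case using assms aut_one_apply by simp
next
  case (Suc j)
  have "(\<eta> [^]\<^bsub>AutoGroup G\<^esub> Suc j) (a [^] k) = \<eta> (a [^] (s ^ j * k))"
    using aut_pow_Suc_apply[OF assms(1)] Suc assms(2) by simp
  also have "\<dots> = (a [^] s) [^] (s ^ j * k)" using aut_natpow[OF assms(1) assms(2)] assms(3) by simp
  also have "\<dots> = a [^] (s ^ Suc j * k)" using assms(2) by (simp add: nat_pow_pow mult.assoc)
  finally show ?case .
qed

lemma circ_dvd:
  assumes p: "Factorial_Ring.prime p" "odd p" and oa: "ord a = p ^ n" and a: "a \<in> carrier G"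
    and eta: "\<eta> \<in> auto G" "\<eta> a = a [^] s" and s: "[s = 1] (mod p)"
    and eq: "circ G \<eta> a m = circ G \<eta> a (m + d)"
  shows "p ^ n dvd d"
proof -
  have "[gsum s m = gsum s m + s ^ m * gsum s d] (mod p ^ n)"
    using eq circ_pow[OF eta(1) a eta(2)] pow_nat_eq_cong[OF a] oa gsum_add by simp
  then have "[s ^ m * gsum s d = 0] (mod p ^ n)" using cong_add_lcancel_0_nat cong_sym by blast
  then have d1: "p ^ n dvd s ^ m * gsum s d" by (simp add: cong_0_iff)
  have "\<not> p dvd s"
  proof
    assume "p dvd s"
    then have "[s = 0] (mod p)" by (simp add: cong_0_iff)
    then have "[1 = 0] (mod p)" using s by (meson cong_sym cong_trans)
    then show False using p(1) by (simp add: cong_0_iff)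
  qed
  then have "coprime p s" using p(1) prime_imp_coprime by blast
  then have "coprime (p ^ n) (s ^ m)" by simp
  then have "p ^ n dvd gsum s d" using d1 coprime_dvd_mult_right_iff by blast
  then show ?thesis using gsum_dvd[OF p s] by blast
qed

end

lemma fermat_self:
  fixes y p :: nat
  assumes p: "Factorial_Ring.prime p"
  shows "[y ^ p = y] (mod p)"
proof (cases "p dvd y")
  case True
  have p0: "p > 0" using p prime_gt_0_nat by blast
  then have "p dvd y ^ p" by (meson True dvd_power dvd_trans)
  then show ?thesis using True by (simp add: cong_def dvd_eq_mod_eq_0)
next
  case False
  have "[y ^ (p - 1) = 1] (mod p)" using fermat_theorem[OF p False] .
  then have "[y * y ^ (p - 1) = y * 1] (mod p)" using cong_scalar_left by blast
  moreover have "y * y ^ (p - 1) = y ^ p" using p prime_gt_0_nat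
    by (metis Suc_diff_1 power_Suc)
  ultimately show ?thesis by simp
qed

lemma fermat_ppow:
  fixes y p :: nat
  assumes p: "Factorial_Ring.prime p"
  shows "[y ^ (p ^ k) = y] (mod p)"
proof (induction k)
  case 0 then show ?case by simp
next
  case (Suc k)
  have "y ^ (p ^ Suc k) = (y ^ (p ^ k)) ^ p" by (metis power_Suc2 power_mult)
  moreover have "[(y ^ (p ^ k)) ^ p = y ^ (p ^ k)] (mod p)" using fermat_self[OF p] .
  ultimately show ?case using Suc cong_trans by metis
qed

theorem mainTheorem9:
  fixes G (structure) and p n :: nat and a :: 'a and \<eta> :: "'a \<Rightarrow> 'a"
  assumes "group G" and "finite (carrier G)"
    and "Factorial_Ring.prime p" and "odd p"
    and "a \<in> carrier G" and "group.ord G a = p ^ n"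
    and "\<eta> \<in> auto G"
  shows "((\<exists>\<gamma>. relative_gamma G (generate G {a}) \<gamma> \<and> \<gamma> a = \<eta>) \<longleftrightarrow>
           (\<eta> ` generate G {a} \<subseteq> generate G {a} \<and>
            group.ord (AutoGroup G) \<eta> dvd p ^ n))
      \<and> (\<forall>\<gamma>1 \<gamma>2. relative_gamma G (generate G {a}) \<gamma>1 \<and> \<gamma>1 a = \<eta> \<and>
                 relative_gamma G (generate G {a}) \<gamma>2 \<and> \<gamma>2 a = \<eta> \<longrightarrow>
                 (\<forall>g\<in>generate G {a}. \<gamma>1 g = \<gamma>2 g))"
proof -
  interpret group G by fact
  interpret Aut: group "AutoGroup G" by (rule AutoGroup)
  note p = assms(3,4)
  note a = assms(5)
  note oa = assms(6)
  note eta = assms(7)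
  define A where "A = generate G {a}"
  have subA: "subgroup A G" unfolding A_def using a by (intro generate_is_subgroup) auto
  have aA: "a \<in> A" unfolding A_def by (rule generate.incl) simp
  have finA: "finite A" using subgroup.subset[OF subA] assms(2) finite_subset by blast
  have cardA: "card A = p ^ n" using generate_pow_card[OF a] oa unfolding A_def by simp
  have Apow: "A = {a [^] k | k. k \<in> (UNIV::nat set)}"
    unfolding A_def using generate_pow_on_finite_carrier[OF assms(2) a] .
  have powA: "a [^] (k::nat) \<in> A" for k using Apow by blast
  have etaC: "\<eta> \<in> carrier (AutoGroup G)" using eta aut_carrier by simp
  have ordeq: "group.ord (AutoGroup G) \<eta> dvd j \<longleftrightarrow> \<eta> [^]\<^bsub>AutoGroup G\<^esub> j = \<one>\<^bsub>AutoGroup G\<^esub>" for j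
    using Aut.pow_eq_id[OF etaC] by simp

  have I: "\<eta> ` A \<subseteq> A \<and> \<eta> [^]\<^bsub>AutoGroup G\<^esub> (p ^ n) = \<one>\<^bsub>AutoGroup G\<^esub>"
    if rg: "relative_gamma G A \<gamma>" and ga: "\<gamma> a = \<eta>" for \<gamma>
  proof
    show "\<eta> ` A \<subseteq> A" using rg ga aA unfolding relative_gamma_def by blast
    show "\<eta> [^]\<^bsub>AutoGroup G\<^esub> (p ^ n) = \<one>\<^bsub>AutoGroup G\<^esub>"
      using gamma_pow_order[OF rg subA finA aA ga] cardA by simp
  qed

  have II: "\<exists>s. \<eta> a = a [^] s \<and> [s = 1] (mod p)"
    if inv: "\<eta> ` A \<subseteq> A" and ep: "\<eta> [^]\<^bsub>AutoGroup G\<^esub> (p ^ n) = \<one>\<^bsub>AutoGroup G\<^esub>"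
  proof (cases "n = 0")
    case True
    then have "ord a dvd 1" using oa by simp
    then have "a [^] (1::nat) = \<one>" using pow_eq_id[OF a, of 1] by blast
    then have a1: "a = \<one>" using a by simp
    then have "\<eta> a = a [^] (1::nat)" using aut_one[OF eta] by simp
    then show ?thesis using cong_refl by blast
  next
    case False
    have "\<eta> a \<in> A" using inv aA by blast
    then obtain s where s: "\<eta> a = a [^] (s::nat)" using Apow by blast
    have "(\<eta> [^]\<^bsub>AutoGroup G\<^esub> (p ^ n)) (a [^] (1::nat)) = a [^] (s ^ (p ^ n) * 1)"
      using autpow_pow[OF eta a s] .
    then have "a [^] (1::nat) = a [^] (s ^ (p ^ n))" using ep aut_one_apply a by simp
    then have "[1 = s ^ (p ^ n)] (mod ord a)" using pow_nat_eq_cong[OF a, of 1 "s ^ (p ^ n)"] by blast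
    then have "[1 = s ^ (p ^ n)] (mod p ^ n)" using oa by simp
    then have "[1 = s ^ (p ^ n)] (mod p)" using False cong_dvd_modulus_nat
      by (metis dvd_power gr0I)
    moreover have "[s ^ (p ^ n) = s] (mod p)" using fermat_ppow[OF p(1)] .
    ultimately have "[s = 1] (mod p)" by (meson cong_sym cong_trans)
    then show ?thesis using s by blast
  qed

  have III: "(\<forall>m1 m2. circ G \<eta> a m1 = circ G \<eta> a m2 \<longrightarrow>
               \<eta> [^]\<^bsub>AutoGroup G\<^esub> m1 = \<eta> [^]\<^bsub>AutoGroup G\<^esub> m2)
           \<and> (\<forall>g\<in>A. \<exists>m. g = circ G \<eta> a m)"
    if inv: "\<eta> ` A \<subseteq> A" and ep: "\<eta> [^]\<^bsub>AutoGroup G\<^esub> (p ^ n) = \<one>\<^bsub>AutoGroup G\<^esub>"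
  proof -
    obtain s where s: "\<eta> a = a [^] s" "[s = 1] (mod p)" using II[OF inv ep] by blast
    have dv: "p ^ n dvd d" if "circ G \<eta> a m = circ G \<eta> a (m + d)" for m d
      using circ_dvd[OF p oa a eta s(1) s(2) that] .
    have epd: "\<eta> [^]\<^bsub>AutoGroup G\<^esub> d = \<one>\<^bsub>AutoGroup G\<^esub>" if "p ^ n dvd d" for d
    proof -
      have "group.ord (AutoGroup G) \<eta> dvd p ^ n" using ordeq ep by blast
      then have "group.ord (AutoGroup G) \<eta> dvd d" using that dvd_trans by blast
      then show ?thesis using ordeq by blast
    qed
    have A1: "\<eta> [^]\<^bsub>AutoGroup G\<^esub> m1 = \<eta> [^]\<^bsub>AutoGroup G\<^esub> m2"
      if c12: "circ G \<eta> a m1 = circ G \<eta> a m2" and le12: "m1 \<le> m2" for m1 m2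
    proof -
      obtain d where d: "m2 = m1 + d" using le12 le_Suc_ex by blast
      have "\<eta> [^]\<^bsub>AutoGroup G\<^esub> d = \<one>\<^bsub>AutoGroup G\<^esub>" using epd dv c12 d by blast
      then show ?thesis using d Aut.nat_pow_mult[OF etaC, of m1 d, symmetric] etaC by simp
    qed
    have part1: "\<forall>m1 m2. circ G \<eta> a m1 = circ G \<eta> a m2 \<longrightarrow>
               \<eta> [^]\<^bsub>AutoGroup G\<^esub> m1 = \<eta> [^]\<^bsub>AutoGroup G\<^esub> m2"
    proof (intro allI impI)
      fix m1 m2 assume e: "circ G \<eta> a m1 = circ G \<eta> a m2"
      show "\<eta> [^]\<^bsub>AutoGroup G\<^esub> m1 = \<eta> [^]\<^bsub>AutoGroup G\<^esub> m2"
      proof (cases "m1 \<le> m2")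
        case True then show ?thesis using A1[OF e] by blast
      next
        case False then show ?thesis using A1[OF e[symmetric]] by simp
      qed
    qed
    have inj: "inj_on (circ G \<eta> a) {..<p ^ n}"
    proof (rule inj_onI)
      fix i j assume i: "i \<in> {..<p ^ n}" and j: "j \<in> {..<p ^ n}" and e: "circ G \<eta> a i = circ G \<eta> a j"
      show "i = j"
      proof (rule ccontr)
        assume "i \<noteq> j"
        then consider "i < j" | "j < i" by linarith
        then show False
        proof cases
          case 1
          then have "p ^ n dvd (j - i)" using dv[of i "j - i"] e by simp
          moreover have "0 < j - i" using 1 by simp
          ultimately have "p ^ n \<le> j - i" by (rule dvd_imp_le)
          then show False using j by simp
        next
          case 2
          then have "p ^ n dvd (i - j)" using dv[of j "i - j"] e by simp
          moreover have "0 < i - j" using 2 by simp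
          ultimately have "p ^ n \<le> i - j" by (rule dvd_imp_le)
          then show False using i by simp
        qed
      qed
    qed
    have sub: "circ G \<eta> a ` {..<p ^ n} \<subseteq> A"
      using circ_pow[OF eta a s(1)] powA by auto
    have "card (circ G \<eta> a ` {..<p ^ n}) = card A" using card_image[OF inj] cardA by simp
    then have "circ G \<eta> a ` {..<p ^ n} = A" using card_subset_eq[OF finA sub] by simp
    then have "\<forall>g\<in>A. \<exists>m. g = circ G \<eta> a m" by blast
    with part1 show ?thesis by blast
  qed

  have uniq: "\<forall>g\<in>A. \<gamma>1 g = \<gamma>2 g"
    if r1: "relative_gamma G A \<gamma>1" "\<gamma>1 a = \<eta>" and r2: "relative_gamma G A \<gamma>2" "\<gamma>2 a = \<eta>" for \<gamma>1 \<gamma>2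
  proof
    fix g assume g: "g \<in> A"
    obtain m where m: "g = circ G \<eta> a m" using III I[OF r1] g by blast
    show "\<gamma>1 g = \<gamma>2 g" using gamma_circ[OF r1(1) subA aA r1(2)] gamma_circ[OF r2(1) subA aA r2(2)] m
      by simp
  qed

  have exist: "\<exists>\<gamma>. relative_gamma G A \<gamma> \<and> \<gamma> a = \<eta>"
    if inv: "\<eta> ` A \<subseteq> A" and ep: "\<eta> [^]\<^bsub>AutoGroup G\<^esub> (p ^ n) = \<one>\<^bsub>AutoGroup G\<^esub>"
  proof -
    obtain s where s: "\<eta> a = a [^] s" "[s = 1] (mod p)" using II[OF inv ep] by blast
    note III' = III[OF inv ep]
    define \<gamma> where "\<gamma> = (\<lambda>g. \<eta> [^]\<^bsub>AutoGroup G\<^esub> (SOME m. g = circ G \<eta> a m))"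
    have gc: "\<gamma> (circ G \<eta> a m) = \<eta> [^]\<^bsub>AutoGroup G\<^esub> m" for m
    proof -
      have "circ G \<eta> a m = circ G \<eta> a (SOME m'. circ G \<eta> a m = circ G \<eta> a m')"
        by (rule someI[of _ m]) simp
      with conjunct1[OF III'] have "\<eta> [^]\<^bsub>AutoGroup G\<^esub> m = \<eta> [^]\<^bsub>AutoGroup G\<^esub> (SOME m'. circ G \<eta> a m = circ G \<eta> a m')"
        by blast
      then show ?thesis unfolding \<gamma>_def by simp
    qed
    have cp: "circ G \<eta> a m = a [^] gsum s m" for m using circ_pow[OF eta a s(1)] .
    have rg: "relative_gamma G A \<gamma>"
      unfolding relative_gamma_def
    proof (intro conjI ballI)
      fix g assume "g \<in> A"
      show "\<gamma> g \<in> auto G" unfolding \<gamma>_def using Aut.nat_pow_closed[OF etaC] aut_carrier by simp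
    next
      fix g h assume g: "g \<in> A" and h: "h \<in> A"
      obtain i where i: "g = circ G \<eta> a i" using III' g by blast
      obtain j where j: "h = circ G \<eta> a j" using III' h by blast
      have "\<gamma> h g \<otimes> h = (\<eta> [^]\<^bsub>AutoGroup G\<^esub> j) (a [^] gsum s i) \<otimes> a [^] gsum s j"
        using gc i j cp by simp
      also have "\<dots> = a [^] (s ^ j * gsum s i) \<otimes> a [^] gsum s j"
        using autpow_pow[OF eta a s(1)] by simp
      also have "\<dots> = a [^] (gsum s j + s ^ j * gsum s i)"
        using nat_pow_mult[OF a] by (simp add: add.commute)
      also have "\<dots> = circ G \<eta> a (j + i)" using cp gsum_add by simp
      finally have "\<gamma> (\<gamma> h g \<otimes> h) = \<eta> [^]\<^bsub>AutoGroup G\<^esub> (j + i)" using gc by simp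
      also have "\<dots> = \<gamma> h \<otimes>\<^bsub>AutoGroup G\<^esub> \<gamma> g"
        using gc i j Aut.nat_pow_mult[OF etaC] by simp
      finally show "\<gamma> (\<gamma> h g \<otimes> h) = \<gamma> h \<otimes>\<^bsub>AutoGroup G\<^esub> \<gamma> g" .
    next
      fix x y assume x: "x \<in> A" and y: "y \<in> A"
      obtain j where j: "y = circ G \<eta> a j" using III' y by blast
      obtain k where k: "x = a [^] (k::nat)" using x Apow by blast
      have "\<gamma> y x = a [^] (s ^ j * k)" using gc j k autpow_pow[OF eta a s(1)] by simp
      then show "\<gamma> y x \<in> A" using powA by simp
    qed
    have "circ G \<eta> a 1 = a" using aut_one[OF eta] a by simp
    then have "\<gamma> a = \<eta>" using gc[of 1] etaC by simp
    with rg show ?thesis by blast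
  qed

  have main: "((\<exists>\<gamma>. relative_gamma G A \<gamma> \<and> \<gamma> a = \<eta>) \<longleftrightarrow>
           (\<eta> ` A \<subseteq> A \<and> group.ord (AutoGroup G) \<eta> dvd p ^ n))
      \<and> (\<forall>\<gamma>1 \<gamma>2. relative_gamma G A \<gamma>1 \<and> \<gamma>1 a = \<eta> \<and>
                 relative_gamma G A \<gamma>2 \<and> \<gamma>2 a = \<eta> \<longrightarrow>
                 (\<forall>g\<in>A. \<gamma>1 g = \<gamma>2 g))"
  proof (intro conjI)
    show "(\<exists>\<gamma>. relative_gamma G A \<gamma> \<and> \<gamma> a = \<eta>) \<longleftrightarrow>
           (\<eta> ` A \<subseteq> A \<and> group.ord (AutoGroup G) \<eta> dvd p ^ n)"
    proof
      assume "\<exists>\<gamma>. relative_gamma G A \<gamma> \<and> \<gamma> a = \<eta>"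
      then obtain \<gamma> where "relative_gamma G A \<gamma>" "\<gamma> a = \<eta>" by blast
      then show "\<eta> ` A \<subseteq> A \<and> group.ord (AutoGroup G) \<eta> dvd p ^ n" using I ordeq by blast
    next
      assume "\<eta> ` A \<subseteq> A \<and> group.ord (AutoGroup G) \<eta> dvd p ^ n"
      then show "\<exists>\<gamma>. relative_gamma G A \<gamma> \<and> \<gamma> a = \<eta>" using exist ordeq by blast
    qed
    show "\<forall>\<gamma>1 \<gamma>2. relative_gamma G A \<gamma>1 \<and> \<gamma>1 a = \<eta> \<and>
                 relative_gamma G A \<gamma>2 \<and> \<gamma>2 a = \<eta> \<longrightarrow>
                 (\<forall>g\<in>A. \<gamma>1 g = \<gamma>2 g)"
      using uniq by blast
  qed
  then show ?thesis unfolding A_def .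
qed

end
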